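(* Let $U\subset\mathbb{R}^n$ be a bounded domain with smooth boundary and let $(u_1,u_2)\in C(\overline U)^2$ be a viscosity solution of the system (S) in $U$. Then $u_1$ and $u_2$ are locally Lipschitz continuous in $U$.
   Context: For $\varphi\in C^2$ near $x$, set $\Delta_\infty\varphi(x)=|D\varphi(x)|^{-2}\sum_{k,l=1}^n\varphi_{x_k}\varphi_{x_l}\varphi_{x_kx_l}(x)$ when $D\varphi(x)\neq0$. Define $\Delta_\infty^+\varphi(x)=\Delta_\infty\varphi(x)$ if $D\varphi(x)\ne0$ and $\Delta_\infty^+\varphi(x)=\max\{D^2\varphi(x)v\cdot v: v\in\mathbb{S}^{n-1}\}$ if $D\varphi(x)=0$; define $\Delta_\infty^-\varphi(x)$ in the same way with $\min$ in place of $\max$. The system (S) on an open set $\Omega$ is: $-\Delta_\infty u_1+u_1-u_2=0$ and $-\Delta_\infty u_2+u_2-u_1=0$ in $\Omega$. A pair $(u_1,u_2)$ of upper semicontinuous functions on $\Omega$ is a viscosity subsolution of (S) in $\Omega$ if for each $i\in\{1,2\}$, $j=3-i$, and each $\varphi\in C^2(\Omega)$ such that $u_i-\varphi$ has a local maximum at $x_0\in\Omega$, one has $-\Delta_\infty^+\varphi(x_0)+u_i(x_0)-u_j(x_0)\le0$. A pair of lower semicontinuous functions on $\Omega$ is a viscosity supersolution if for each $i$, $j=3-i$, and each $\varphi\in C^2(\Omega)$ such that $u_i-\varphi$ has a local minimum at $x_0\in\Omega$, one has $-\Delta_\infty^-\varphi(x_0)+u_i(x_0)-u_j(x_0)\ge0$.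 A viscosity solution is a pair that is both a subsolution and a supersolution. *)

theory Defs
  imports "HOL-Analysis.Analysis"
begin

fun Ck :: "nat \<Rightarrow> ('a::euclidean_space \<Rightarrow> real) \<Rightarrow> 'a set \<Rightarrow> bool" where
  "Ck 0 f S = continuous_on S f"
| "Ck (Suc k) f S = (continuous_on S f \<and> (\<forall>x\<in>S. f differentiable (at x)) \<and>
      (\<forall>b\<in>Basis. Ck k (\<lambda>x. frechet_derivative f (at x) b) S))"

definition smooth_on :: "('a::euclidean_space \<Rightarrow> real) \<Rightarrow> 'a set \<Rightarrow> bool" where
  "smooth_on f S \<longleftrightarrow> (\<forall>k. Ck k f S)"

definition smooth_boundary :: "'a::euclidean_space set \<Rightarrow> bool" where
  "smooth_boundary U \<longleftrightarrow> (\<forall>p\<in>frontier U. \<exists>r>0. \<exists>\<rho>. smooth_on \<rho> (ball p r) \<and>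
      (\<forall>x\<in>ball p r. x \<in> U \<longleftrightarrow> \<rho> x < 0) \<and> frechet_derivative \<rho> (at p) \<noteq> (\<lambda>h. 0))"

definition grad :: "('a::euclidean_space \<Rightarrow> real) \<Rightarrow> 'a \<Rightarrow> 'a" where
  "grad \<phi> x = (\<Sum>b\<in>Basis. frechet_derivative \<phi> (at x) b *\<^sub>R b)"

definition hess :: "('a::euclidean_space \<Rightarrow> real) \<Rightarrow> 'a \<Rightarrow> 'a \<Rightarrow> 'a \<Rightarrow> real" where
  "hess \<phi> x v w = frechet_derivative (\<lambda>y. frechet_derivative \<phi> (at y) v) (at x) w"

definition inf_lap :: "('a::euclidean_space \<Rightarrow> real) \<Rightarrow> 'a \<Rightarrow> real" where
  "inf_lap \<phi> x = (\<Sum>k\<in>Basis. \<Sum>l\<in>Basis.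
      frechet_derivative \<phi> (at x) k * frechet_derivative \<phi> (at x) l * hess \<phi> x k l)
      / (norm (grad \<phi> x))\<^sup>2"

definition inf_lap_plus :: "('a::euclidean_space \<Rightarrow> real) \<Rightarrow> 'a \<Rightarrow> real" where
  "inf_lap_plus \<phi> x = (if grad \<phi> x \<noteq> 0 then inf_lap \<phi> x
      else (SUP v\<in>sphere 0 1. hess \<phi> x v v))"

definition inf_lap_minus :: "('a::euclidean_space \<Rightarrow> real) \<Rightarrow> 'a \<Rightarrow> real" where
  "inf_lap_minus \<phi> x = (if grad \<phi> x \<noteq> 0 then inf_lap \<phi> x
      else (INF v\<in>sphere 0 1. hess \<phi> x v v))"

definition usc_on :: "'a::metric_space set \<Rightarrow> ('a \<Rightarrow> real) \<Rightarrow> bool" where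
  "usc_on \<Omega> u \<longleftrightarrow> (\<forall>x\<in>\<Omega>. \<forall>e>0. \<forall>\<^sub>F y in at x within \<Omega>. u y < u x + e)"

definition lsc_on :: "'a::metric_space set \<Rightarrow> ('a \<Rightarrow> real) \<Rightarrow> bool" where
  "lsc_on \<Omega> u \<longleftrightarrow> (\<forall>x\<in>\<Omega>. \<forall>e>0. \<forall>\<^sub>F y in at x within \<Omega>. u x - e < u y)"

definition visc_sub_comp :: "'a::euclidean_space set \<Rightarrow> ('a \<Rightarrow> real) \<Rightarrow> ('a \<Rightarrow> real) \<Rightarrow> bool" where
  "visc_sub_comp \<Omega> ui uj \<longleftrightarrow> (\<forall>\<phi> x0. Ck 2 \<phi> \<Omega> \<longrightarrow> x0 \<in> \<Omega> \<longrightarrow>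
      (\<exists>r>0. \<forall>y\<in>ball x0 r \<inter> \<Omega>. ui y - \<phi> y \<le> ui x0 - \<phi> x0) \<longrightarrow>
      - inf_lap_plus \<phi> x0 + ui x0 - uj x0 \<le> 0)"

definition visc_super_comp :: "'a::euclidean_space set \<Rightarrow> ('a \<Rightarrow> real) \<Rightarrow> ('a \<Rightarrow> real) \<Rightarrow> bool" where
  "visc_super_comp \<Omega> ui uj \<longleftrightarrow> (\<forall>\<phi> x0. Ck 2 \<phi> \<Omega> \<longrightarrow> x0 \<in> \<Omega> \<longrightarrow>
      (\<exists>r>0. \<forall>y\<in>ball x0 r \<inter> \<Omega>. ui y - \<phi> y \<ge> ui x0 - \<phi> x0) \<longrightarrow>
      - inf_lap_minus \<phi> x0 + ui x0 - uj x0 \<ge> 0)"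

definition visc_subsolution :: "'a::euclidean_space set \<Rightarrow> ('a \<Rightarrow> real) \<Rightarrow> ('a \<Rightarrow> real) \<Rightarrow> bool" where
  "visc_subsolution \<Omega> u1 u2 \<longleftrightarrow> usc_on \<Omega> u1 \<and> usc_on \<Omega> u2 \<and>
      visc_sub_comp \<Omega> u1 u2 \<and> visc_sub_comp \<Omega> u2 u1"

definition visc_supersolution :: "'a::euclidean_space set \<Rightarrow> ('a \<Rightarrow> real) \<Rightarrow> ('a \<Rightarrow> real) \<Rightarrow> bool" where
  "visc_supersolution \<Omega> u1 u2 \<longleftrightarrow> lsc_on \<Omega> u1 \<and> lsc_on \<Omega> u2 \<and>
      visc_super_comp \<Omega> u1 u2 \<and> visc_super_comp \<Omega> u2 u1"

definition visc_solution :: "'a::euclidean_space set \<Rightarrow> ('a \<Rightarrow> real) \<Rightarrow> ('a \<Rightarrow> real) \<Rightarrow> bool" where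
  "visc_solution \<Omega> u1 u2 \<longleftrightarrow> visc_subsolution \<Omega> u1 u2 \<and> visc_supersolution \<Omega> u1 u2"

definition locally_lipschitz_in :: "'a::metric_space set \<Rightarrow> ('a \<Rightarrow> real) \<Rightarrow> bool" where
  "locally_lipschitz_in U u \<longleftrightarrow> (\<forall>x\<in>U. \<exists>r>0. \<exists>L. ball x r \<subseteq> U \<and> L-lipschitz_on (ball x r) u)"

end

theory Submission
  imports Defs
begin

definition qf :: "'a::euclidean_space \<Rightarrow> real \<Rightarrow> 'a \<Rightarrow> real \<Rightarrow> real \<Rightarrow> real \<Rightarrow> 'a \<Rightarrow> real" where
  "qf x0 A e L g d z = A + L * (e \<bullet> (z - x0)) + g * ((z - x0) \<bullet> (z - x0)) + d * ((e \<bullet> (z - x0)) * (e \<bullet> (z - x0)))"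

lemma qf_deriv: "(qf x0 A e L g d has_derivative
   (\<lambda>h. L * (e \<bullet> h) + 2 * g * ((z - x0) \<bullet> h) + 2 * d * (e \<bullet> (z - x0)) * (e \<bullet> h))) (at z)"
  unfolding qf_def
  apply (intro derivative_eq_intros)
  apply (rule refl)+
  apply (simp add: fun_eq_iff algebra_simps)
  apply (simp add: inner_commute)
  done

lemma qf_fd: "frechet_derivative (qf x0 A e L g d) (at z) =
   (\<lambda>h. L * (e \<bullet> h) + 2 * g * ((z - x0) \<bullet> h) + 2 * d * (e \<bullet> (z - x0)) * (e \<bullet> h))"
  by (rule frechet_derivative_at[OF qf_deriv, symmetric])

lemma qf1_deriv: "((\<lambda>z. L * (e \<bullet> b) + 2 * g * ((z - x0) \<bullet> b) + 2 * d * (e \<bullet> (z - x0)) * (e \<bullet> b)) has_derivative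
   (\<lambda>h. 2 * g * (h \<bullet> b) + 2 * d * (e \<bullet> h) * (e \<bullet> b))) (at z)"
  apply (intro derivative_eq_intros)
  apply (rule refl)+
  apply (simp add: fun_eq_iff algebra_simps)
  done

lemma qf_fd2: "frechet_derivative (\<lambda>z. frechet_derivative (qf x0 A e L g d) (at z) b) (at z) =
   (\<lambda>h. 2 * g * (h \<bullet> b) + 2 * d * (e \<bullet> h) * (e \<bullet> b))"
  unfolding qf_fd by (rule frechet_derivative_at[OF qf1_deriv, symmetric])

lemma qf_C2: "Ck 2 (qf x0 A e L g d) S"
proof -
  have c: "continuous_on S (qf x0 A e L g d)" unfolding qf_def by (intro continuous_intros)
  have d: "\<forall>x\<in>S. qf x0 A e L g d differentiable (at x)"
    using differentiableI[OF qf_deriv] by blast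
  have c1: "continuous_on S (\<lambda>x. frechet_derivative (qf x0 A e L g d) (at x) b)" for b
    unfolding qf_fd by (intro continuous_intros)
  have d1: "\<forall>x\<in>S. (\<lambda>x. frechet_derivative (qf x0 A e L g d) (at x) b) differentiable (at x)" for b
    unfolding qf_fd using differentiableI[OF qf1_deriv] by blast
  have c2: "continuous_on S (\<lambda>x. frechet_derivative (\<lambda>x. frechet_derivative (qf x0 A e L g d) (at x) b) (at x) b')" for b b'
    unfolding qf_fd2 by simp
  have "Ck (Suc (Suc 0)) (qf x0 A e L g d) S"
    unfolding Ck.simps by (intro conjI ballI c c1 c2 d[rule_format] d1[rule_format])
  thus ?thesis unfolding numeral_2_eq_2 .
qed

lemma qf_hess: "hess (qf x0 A e L g d) z v w = 2 * g * (w \<bullet> v) + 2 * d * (e \<bullet> w) * (e \<bullet> v)"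
  unfolding hess_def qf_fd2 by simp

lemma qf_grad: "grad (qf x0 A e L g d) z = L *\<^sub>R e + (2 * g) *\<^sub>R (z - x0) + (2 * d * (e \<bullet> (z - x0))) *\<^sub>R e"
  (is "_ = ?G")
proof -
  have fb: "frechet_derivative (qf x0 A e L g d) (at z) b = ?G \<bullet> b" for b
    unfolding qf_fd by (simp add: inner_add_left)
  have "grad (qf x0 A e L g d) z = (\<Sum>b\<in>Basis. (?G \<bullet> b) *\<^sub>R b)"
    unfolding grad_def fb by (rule refl)
  also have "\<dots> = ?G" by (rule euclidean_representation)
  finally show ?thesis .
qed

lemma qf_fd_grad: "frechet_derivative (qf x0 A e L g d) (at z) b = grad (qf x0 A e L g d) z \<bullet> b"
  unfolding qf_grad qf_fd by (simp add: inner_add_left)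

lemma qf_inf_lap:
  assumes e: "norm e = 1" and G: "grad (qf x0 A e L g d) z = s *\<^sub>R e" and s: "s \<noteq> 0"
  shows "inf_lap_minus (qf x0 A e L g d) z = 2 * g + 2 * d"
proof -
  have ee: "e \<bullet> e = 1" using e by (simp add: dot_square_norm)
  have i1: "(\<Sum>l\<in>Basis. (e \<bullet> l) * (k \<bullet> l)) = e \<bullet> k" for k
    by (simp add: euclidean_inner[of e k])
  have i2: "(\<Sum>k\<in>Basis. (e \<bullet> k) * (e \<bullet> k)) = 1"
    using ee by (simp add: euclidean_inner[of e e])
  have fd: "frechet_derivative (qf x0 A e L g d) (at z) b = s * (e \<bullet> b)" for b
    unfolding qf_fd_grad G by simp
  have inner: "(\<Sum>l\<in>Basis. frechet_derivative (qf x0 A e L g d) (at z) k * frechet_derivative (qf x0 A e L g d) (at z) l *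
          hess (qf x0 A e L g d) z k l)
     = (s^2 * 2 * g) * (e \<bullet> k) * (\<Sum>l\<in>Basis. (e \<bullet> l) * (k \<bullet> l))
       + (s^2 * 2 * d) * (e \<bullet> k) * (e \<bullet> k) * (\<Sum>l\<in>Basis. (e \<bullet> l) * (e \<bullet> l))" for k
  proof -
    have "(\<Sum>l\<in>Basis. frechet_derivative (qf x0 A e L g d) (at z) k * frechet_derivative (qf x0 A e L g d) (at z) l *
          hess (qf x0 A e L g d) z k l)
      = (\<Sum>l\<in>Basis. (s^2 * 2 * g) * (e \<bullet> k) * ((e \<bullet> l) * (k \<bullet> l))
           + (s^2 * 2 * d) * (e \<bullet> k) * (e \<bullet> k) * ((e \<bullet> l) * (e \<bullet> l)))"
    proof (rule sum.cong[OF refl])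
      fix l
      show "frechet_derivative (qf x0 A e L g d) (at z) k * frechet_derivative (qf x0 A e L g d) (at z) l *
          hess (qf x0 A e L g d) z k l = (s^2 * 2 * g) * (e \<bullet> k) * ((e \<bullet> l) * (k \<bullet> l))
           + (s^2 * 2 * d) * (e \<bullet> k) * (e \<bullet> k) * ((e \<bullet> l) * (e \<bullet> l))"
        unfolding fd qf_hess inner_commute[of l k] by (simp add: power2_eq_square algebra_simps)
    qed
    also have "\<dots> = (s^2 * 2 * g) * (e \<bullet> k) * (\<Sum>l\<in>Basis. (e \<bullet> l) * (k \<bullet> l))
       + (s^2 * 2 * d) * (e \<bullet> k) * (e \<bullet> k) * (\<Sum>l\<in>Basis. (e \<bullet> l) * (e \<bullet> l))"
      by (simp only: sum.distrib sum_distrib_left)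
    finally show ?thesis .
  qed
  have num: "(\<Sum>k\<in>Basis. \<Sum>l\<in>Basis. frechet_derivative (qf x0 A e L g d) (at z) k * frechet_derivative (qf x0 A e L g d) (at z) l *
          hess (qf x0 A e L g d) z k l) = s^2 * (2 * g + 2 * d)"
  proof -
    have "(\<Sum>k\<in>Basis. \<Sum>l\<in>Basis. frechet_derivative (qf x0 A e L g d) (at z) k * frechet_derivative (qf x0 A e L g d) (at z) l *
          hess (qf x0 A e L g d) z k l) = (\<Sum>k\<in>Basis. s\<^sup>2 * 2 * g * (e \<bullet> k) * (e \<bullet> k) + s\<^sup>2 * 2 * d * (e \<bullet> k) * (e \<bullet> k) * 1)"
      by (simp only: inner i1 i2 ee)
    also have "\<dots> = (\<Sum>k\<in>Basis. (s\<^sup>2 * (2 * g + 2 * d)) * ((e \<bullet> k) * (e \<bullet> k)))"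
      by (rule sum.cong[OF refl]) (simp add: algebra_simps)
    also have "\<dots> = s\<^sup>2 * (2 * g + 2 * d)" by (simp only: sum_distrib_left[symmetric] i2 mult_1_right)
    finally show ?thesis .
  qed
  have ng: "(norm (grad (qf x0 A e L g d) z))^2 = s^2" using e G by simp
  have gn: "grad (qf x0 A e L g d) z \<noteq> 0" using G s e by auto
  have "inf_lap_minus (qf x0 A e L g d) z = s^2 * (2 * g + 2 * d) / s^2"
    unfolding inf_lap_minus_def inf_lap_def num ng using gn by simp
  thus ?thesis using s by simp
qed


lemma barrier:
  fixes a n t :: real
  assumes "t > 0" "2 * a \<ge> t" "a \<le> n"
  shows "n \<le> a + (n^2 - a^2) / t"
proof -
  have "(n - a) * t \<le> (n - a) * (n + a)"
    using assms by (intro mult_left_mono) auto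
  hence "(n - a) * t \<le> n^2 - a^2" by (simp add: algebra_simps power2_eq_square)
  hence "n - a \<le> (n^2 - a^2) / t" using assms by (simp add: pos_le_divide_eq)
  thus ?thesis by simp
qed

lemma key:
  fixes U :: "'a::euclidean_space set" and u v :: "'a \<Rightarrow> real"
  assumes sup: "visc_super_comp U u v"
    and bu: "\<forall>x\<in>U. \<bar>u x\<bar> \<le> M"
    and buv: "\<forall>x\<in>U. u x - v x < 2 * c"
    and cont: "continuous_on U u"
    and R: "R > 0" "cball x0 R \<subseteq> U"
    and L1: "2 * M - L * R + c * R^2 < 0" and L2: "2 * c * R < L" and c: "c > 0"
    and y: "y \<in> cball x0 R"
  shows "u x0 - u y \<le> L * dist x0 y"
proof -
  define \<Phi> where "\<Phi> y = u x0 - u y - L * norm (y - x0) + c * (norm (y - x0))^2" for y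
  have x0U: "x0 \<in> U" using R by auto
  have cc: "continuous_on (cball x0 R) \<Phi>"
    unfolding \<Phi>_def using continuous_on_subset[OF cont R(2)]
    by (intro continuous_intros) auto
  obtain ys where ys: "ys \<in> cball x0 R" and ysmax: "\<forall>y\<in>cball x0 R. \<Phi> y \<le> \<Phi> ys"
    using continuous_attains_sup[OF compact_cball _ cc] R by auto
  have ysU: "ys \<in> U" using ys R by auto
  have Lpos: "L > 0" using L2 c R by (smt (verit) mult_pos_pos)
  have le0: "\<Phi> ys \<le> 0"
  proof (rule ccontr)
    assume "\<not> \<Phi> ys \<le> 0"
    hence mpos: "\<Phi> ys > 0" by simp
    define m where "m = \<Phi> ys"
    define t where "t = norm (ys - x0)"
    have tR: "t \<le> R" using ys unfolding t_def by (simp add: dist_norm norm_minus_commute)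
    have t0: "t \<noteq> 0"
    proof
      assume "t = 0" hence "ys = x0" unfolding t_def by simp
      thus False using mpos unfolding \<Phi>_def by simp
    qed
    hence tpos: "t > 0" unfolding t_def by simp
    have tR': "t < R"
    proof (rule ccontr)
      assume "\<not> t < R" hence tt: "t = R" using tR by simp
      have "\<Phi> ys \<le> 2 * M - L * R + c * R^2"
        unfolding \<Phi>_def t_def[symmetric] tt using bu x0U ysU by (smt (verit))
      thus False using L1 mpos by simp
    qed
    define e where "e = (1 / t) *\<^sub>R (ys - x0)"
    have ne: "norm e = 1" unfolding e_def t_def using t0 t_def by simp
    have ysx: "ys - x0 = t *\<^sub>R e" unfolding e_def using t0 by simp
    have eys: "e \<bullet> (ys - x0) = t" unfolding ysx using ne by (simp add: dot_square_norm)
    have ysys: "(ys - x0) \<bullet> (ys - x0) = t^2" unfolding t_def by (simp add: dot_square_norm)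
    define \<psi> where "\<psi> = qf x0 (u x0 - m) e (- L) (c - L / t) (L / t)"
    have psiys: "\<psi> ys = u ys"
    proof -
      have "\<psi> ys = u x0 - m - L * t + (c - L / t) * t^2 + (L / t) * (t * t)"
        unfolding \<psi>_def qf_def eys ysys by simp
      also have "\<dots> = u x0 - m - L * t + c * t^2" using t0 by (simp add: field_simps power2_eq_square)
      also have "\<dots> = u ys" unfolding m_def \<Phi>_def t_def by simp
      finally show ?thesis .
    qed
    define r where "r = min (t / 2) (R - t)"
    have rpos: "r > 0" unfolding r_def using tpos tR' by simp
    have locmin: "\<forall>z\<in>ball ys r \<inter> U. u z - \<psi> z \<ge> u ys - \<psi> ys"
    proof
      fix z assume "z \<in> ball ys r \<inter> U"
      hence zd: "norm (z - ys) < r" by (simp add: dist_norm norm_minus_commute)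
      define n where "n = norm (z - x0)"
      define a where "a = e \<bullet> (z - x0)"
      have "n \<le> norm (ys - x0) + norm (z - ys)" unfolding n_def
        using norm_triangle_ineq[of "ys - x0" "z - ys"] by simp
      hence "n < R" using zd unfolding r_def t_def[symmetric] by simp
      hence zc: "z \<in> cball x0 R" unfolding n_def by (simp add: dist_norm norm_minus_commute)
      have "\<bar>e \<bullet> (z - ys)\<bar> \<le> norm (z - ys)" using Cauchy_Schwarz_ineq2[of e "z - ys"] ne by simp
      moreover have "a = t + e \<bullet> (z - ys)"
      proof -
        have "z - x0 = (ys - x0) + (z - ys)" by simp
        hence "a = e \<bullet> (ys - x0) + e \<bullet> (z - ys)" unfolding a_def by (simp only: inner_add_right)
        thus ?thesis using eys by simp
      qed
      moreover have "norm (z - ys) < t / 2" using zd unfolding r_def by simp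
      ultimately have a2: "2 * a \<ge> t" by (simp add: abs_le_iff)
      have an: "a \<le> n" unfolding a_def n_def using norm_cauchy_schwarz[of e "z - x0"] ne by simp
      have bar: "n \<le> a + (n^2 - a^2) / t" by (rule barrier[OF tpos a2 an])
      have "\<Phi> z \<le> m" using ysmax zc unfolding m_def by simp
      hence uz: "u z \<ge> u x0 - m - L * n + c * n^2" unfolding \<Phi>_def n_def by simp
      have "\<psi> z = u x0 - m - L * (a + (n^2 - a^2) / t) + c * n^2"
        unfolding \<psi>_def qf_def a_def[symmetric] n_def using t0
        by (simp add: dot_square_norm field_simps power2_eq_square)
      also have "\<dots> \<le> u x0 - m - L * n + c * n^2" using bar Lpos by (simp add: mult_left_mono)
      finally show "u z - \<psi> z \<ge> u ys - \<psi> ys" using uz psiys by simp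
    qed
    have G: "grad \<psi> ys = (2 * c * t - L) *\<^sub>R e"
      using t0 ne unfolding \<psi>_def qf_grad eys ysx by (simp add: algebra_simps dot_square_norm)
    have sne: "2 * c * t - L \<noteq> 0"
    proof -
      have "2 * c * t \<le> 2 * c * R" using tR c by simp
      thus ?thesis using L2 by simp
    qed
    have lap: "inf_lap_minus \<psi> ys = 2 * c"
      using qf_inf_lap[OF ne G[unfolded \<psi>_def] sne] unfolding \<psi>_def by simp
    have ex: "\<exists>r>0. \<forall>y\<in>ball ys r \<inter> U. u y - \<psi> y \<ge> u ys - \<psi> ys"
      using rpos locmin by blast
    have C2: "Ck 2 \<psi> U" unfolding \<psi>_def by (rule qf_C2)
    have "- inf_lap_minus \<psi> ys + u ys - v ys \<ge> 0"
      using sup[unfolded visc_super_comp_def, rule_format, OF C2 ysU ex] .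
    thus False using lap buv ysU by auto
  qed
  have "\<Phi> y \<le> 0" using ysmax y le0 by force
  hence "u x0 - u y \<le> L * norm (y - x0) - c * (norm (y - x0))^2" unfolding \<Phi>_def by simp
  also have "\<dots> \<le> L * norm (y - x0)" using c by simp
  finally show ?thesis by (simp add: dist_norm norm_minus_commute)
qed


lemma locLip:
  fixes U :: "'a::euclidean_space set" and u v :: "'a \<Rightarrow> real"
  assumes sup: "visc_super_comp U u v" and oU: "open U"
    and bu: "\<forall>x\<in>U. \<bar>u x\<bar> \<le> M"
    and buv: "\<forall>x\<in>U. u x - v x < 2 * c"
    and cont: "continuous_on U u" and c: "c > 0" and M: "M \<ge> 0"
  shows "locally_lipschitz_in U u"
  unfolding locally_lipschitz_in_def
proof
  fix z assume zU: "z \<in> U"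
  obtain e where e: "e > 0" "cball z e \<subseteq> U" using oU zU open_contains_cball by blast
  define R where "R = e / 2"
  have R: "R > 0" unfolding R_def using e by simp
  define L where "L = (2 * M + 1) / R + c * R + 2 * c * R + 1"
  have LR: "L * R = 2 * M + 1 + c * R^2 + 2 * c * R^2 + R"
    unfolding L_def using R by (simp add: field_simps power2_eq_square)
  have L1: "2 * M - L * R + c * R^2 < 0" unfolding LR using c R by (smt (verit) mult_pos_pos zero_less_power)
  have L2: "2 * c * R < L"
  proof -
    have "(2 * M + 1) / R \<ge> 0" using R M by simp
    moreover have "c * R > 0" using R c by simp
    ultimately show ?thesis unfolding L_def by linarith
  qed
  have Lpos: "L \<ge> 0" using L2 c R by (smt (verit) mult_pos_pos)
  have one: "u x - u y \<le> L * dist x y" if x: "x \<in> ball z (R/2)" and y: "y \<in> ball z (R/2)" for x y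
  proof (rule key[OF sup _ buv cont R _ L1 L2 c])
    show "\<forall>x\<in>U. \<bar>u x\<bar> \<le> M" by (rule bu)
    show "cball x R \<subseteq> U"
    proof
      fix w assume "w \<in> cball x R"
      hence "dist z w \<le> e" using x dist_triangle[of z w x] e(1) unfolding R_def by (simp add: dist_commute)
      thus "w \<in> U" using e by auto
    qed
    show "y \<in> cball x R" using x y dist_triangle[of x y z] R by (simp add: dist_commute)
  qed
  show "\<exists>r>0. \<exists>L. ball z r \<subseteq> U \<and> L-lipschitz_on (ball z r) u"
  proof (intro exI conjI)
    show "R / 2 > 0" using R by simp
    show "ball z (R / 2) \<subseteq> U" using e unfolding R_def by auto
    show "L-lipschitz_on (ball z (R / 2)) u"
    proof (rule lipschitz_onI[OF _ Lpos])
      fix x y assume "x \<in> ball z (R / 2)" "y \<in> ball z (R / 2)"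
      thus "dist (u x) (u y) \<le> L * dist x y"
        using one[of x y] one[of y x] by (simp add: dist_real_def dist_commute)
    qed
  qed
qed

theorem mainTheorem9:
  fixes U :: "'a::euclidean_space set" and u1 u2 :: "'a \<Rightarrow> real"
  assumes "open U" and "connected U" and "U \<noteq> {}" and "bounded U"
    and "smooth_boundary U"
    and "continuous_on (closure U) u1" and "continuous_on (closure U) u2"
    and "visc_solution U u1 u2"
  shows "locally_lipschitz_in U u1 \<and> locally_lipschitz_in U u2"
proof -
  have K: "compact (closure U)" using assms(4) by (simp add: compact_closure)
  have Kne: "closure U \<noteq> {}" using assms(3) by simp
  have a1: "continuous_on (closure U) (\<lambda>x. \<bar>u1 x\<bar>)" using assms(6) by (intro continuous_intros)
  have a2: "continuous_on (closure U) (\<lambda>x. \<bar>u2 x\<bar>)" using assms(7) by (intro continuous_intros)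
  obtain x1 where x1: "\<forall>y\<in>closure U. \<bar>u1 y\<bar> \<le> \<bar>u1 x1\<bar>"
    using continuous_attains_sup[OF K Kne a1] by auto
  obtain x2 where x2: "\<forall>y\<in>closure U. \<bar>u2 y\<bar> \<le> \<bar>u2 x2\<bar>"
    using continuous_attains_sup[OF K Kne a2] by auto
  define M where "M = \<bar>u1 x1\<bar> + \<bar>u2 x2\<bar>"
  have M: "M \<ge> 0" unfolding M_def by simp
  have b1: "\<forall>x\<in>U. \<bar>u1 x\<bar> \<le> M" using x1 x2 closure_subset unfolding M_def by (smt (verit) subsetD)
  have b2: "\<forall>x\<in>U. \<bar>u2 x\<bar> \<le> M" using x1 x2 closure_subset unfolding M_def by (smt (verit) subsetD)
  define c where "c = M + 1"
  have c: "c > 0" unfolding c_def using M by simp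
  have b12: "\<forall>x\<in>U. u1 x - u2 x < 2 * c" using b1 b2 unfolding c_def by (smt (verit))
  have b21: "\<forall>x\<in>U. u2 x - u1 x < 2 * c" using b1 b2 unfolding c_def by (smt (verit))
  have c1: "continuous_on U u1" using continuous_on_subset[OF assms(6) closure_subset] .
  have c2: "continuous_on U u2" using continuous_on_subset[OF assms(7) closure_subset] .
  have s1: "visc_super_comp U u1 u2" and s2: "visc_super_comp U u2 u1"
    using assms(8) unfolding visc_solution_def visc_supersolution_def by auto
  show ?thesis
    using locLip[OF s1 assms(1) b1 b12 c1 c M] locLip[OF s2 assms(1) b2 b21 c2 c M] by simp
qed

end
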